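(* Let $\{\varphi_n\},\{\psi_n\}$ be biorthogonal sequences in a Hilbert space $\mathcal H$ forming a $(\mathcal D,\mathcal E)$-quasi basis for dense subspaces $\mathcal D,\mathcal E$ with $D_\psi\subseteq\mathcal D\subseteq D(\varphi)$, $D_\varphi\subseteq\mathcal E\subseteq D(\psi)$. Suppose there is a real sequence $\{r_n\}$ with $r_n\ge1$ for all $n$ such that $D(\varphi_r):=\{x\in\mathcal H:\sum_k r_k^2|\langle x,\varphi_k\rangle|^2<\infty\}$ satisfies $D(\varphi_r)\subseteq\mathcal D$ and $D(\varphi_r)$ is dense in $\mathcal H$. Then $D_\varphi$ is dense in $\mathcal H$ and $(\{\varphi_n\},\{\psi_n\})$ is a $(D(\varphi),D_\varphi)$-quasi basis.
   Context: Inner product linear in the first argument. Biorthogonal: $\langle\varphi_n,\psi_m\rangle=\delta_{nm}$. $D_\varphi,D_\psi$ are the linear spans; $D(\varphi)=\{x:\sum_n|\langle x,\varphi_n\rangle|^2<\infty\}$, similarly $D(\psi)$. The pair is a $(\mathcal D,\mathcal E)$-quasi basis if $\sum_k\langle x,\varphi_k\rangle\langle\psi_k,y\rangle=\langle x,y\rangle$ for all $x\in\mathcal D$, $y\in\mathcal E$. *)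

theory Defs
  imports "HOL-Analysis.Analysis"
begin

text \<open>A complex inner product space is a (real) normed vector space equipped with a complex
  scalar multiplication compatible with the real one, and a complex inner product which is
  linear in the FIRST argument, conjugate symmetric, and induces the norm.\<close>

class complex_inner = real_normed_vector +
  fixes scaleC :: "complex \<Rightarrow> 'a \<Rightarrow> 'a"
  fixes cinner :: "'a \<Rightarrow> 'a \<Rightarrow> complex"
  assumes scaleC_add_right: "scaleC a (x + y) = scaleC a x + scaleC a y"
    and scaleC_add_left: "scaleC (a + b) x = scaleC a x + scaleC b x"
    and scaleC_scaleC: "scaleC a (scaleC b x) = scaleC (a * b) x"
    and scaleC_one: "scaleC 1 x = x"
    and scaleR_scaleC: "scaleR r x = scaleC (complex_of_real r) x"
    and cinner_add_left: "cinner (x + y) z = cinner x z + cinner y z"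
    and cinner_scaleC_left: "cinner (scaleC a x) y = a * cinner x y"
    and cinner_commute: "cinner y x = cnj (cinner x y)"
    and norm_eq_sqrt_cinner: "norm x = sqrt (Re (cinner x x))"

class chilbert = complex_inner + complete_space

definition cspan :: "'a::complex_inner set \<Rightarrow> 'a set" where
  "cspan S = {x. \<exists>F c. finite F \<and> F \<subseteq> S \<and> x = (\<Sum>v\<in>F. scaleC (c v) v)}"

definition csubspace :: "'a::complex_inner set \<Rightarrow> bool" where
  "csubspace S \<longleftrightarrow> 0 \<in> S \<and> (\<forall>x\<in>S. \<forall>y\<in>S. x + y \<in> S) \<and> (\<forall>a. \<forall>x\<in>S. scaleC a x \<in> S)"

definition dense_in_H :: "'a::complex_inner set \<Rightarrow> bool" where
  "dense_in_H S \<longleftrightarrow> closure S = UNIV"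

definition biorthogonal :: "(nat \<Rightarrow> 'a::complex_inner) \<Rightarrow> (nat \<Rightarrow> 'a) \<Rightarrow> bool" where
  "biorthogonal \<phi> \<psi> \<longleftrightarrow> (\<forall>n m. cinner (\<phi> n) (\<psi> m) = (if n = m then 1 else 0))"

definition Dom :: "(nat \<Rightarrow> 'a::complex_inner) \<Rightarrow> 'a set" where
  "Dom \<phi> = {x. summable (\<lambda>n. (cmod (cinner x (\<phi> n)))\<^sup>2)}"

definition Dom_weighted :: "(nat \<Rightarrow> real) \<Rightarrow> (nat \<Rightarrow> 'a::complex_inner) \<Rightarrow> 'a set" where
  "Dom_weighted r \<phi> = {x. summable (\<lambda>k. (r k)\<^sup>2 * (cmod (cinner x (\<phi> k)))\<^sup>2)}"

definition quasi_basis ::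
  "(nat \<Rightarrow> 'a::complex_inner) \<Rightarrow> (nat \<Rightarrow> 'a) \<Rightarrow> 'a set \<Rightarrow> 'a set \<Rightarrow> bool" where
  "quasi_basis \<phi> \<psi> D E \<longleftrightarrow>
     (\<forall>x\<in>D. \<forall>y\<in>E. (\<lambda>k. cinner x (\<phi> k) * cinner (\<psi> k) y) sums cinner x y)"

end

theory Submission
  imports Defs
begin

lemma cinner_zero_left[simp]: "cinner (0::'a::complex_inner) y = 0"
proof -
  have h: "cinner (0::'a) y = cinner 0 y + cinner 0 y" using cinner_add_left[of "0::'a" 0 y] by (simp only: add_0_right)
  show ?thesis using add_cancel_right_right[of "cinner (0::'a) y" "cinner 0 y"] h by blast
qed
lemma cinner_add_right: "cinner (x::'a::complex_inner) (y + z) = cinner x y + cinner x z"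
proof -
  have "cinner x (y + z) = cnj (cinner (y + z) x)" by (rule cinner_commute)
  also have "\<dots> = cnj (cinner y x) + cnj (cinner z x)" by (simp only: cinner_add_left complex_cnj_add)
  also have "\<dots> = cinner x y + cinner x z" by (simp only: cinner_commute[symmetric])
  finally show ?thesis .
qed
lemma cinner_scaleC_right: "cinner (x::'a::complex_inner) (scaleC a y) = cnj a * cinner x y"
proof -
  have "cinner x (scaleC a y) = cnj (cinner (scaleC a y) x)" by (rule cinner_commute)
  also have "\<dots> = cnj a * cnj (cinner y x)" by (simp only: cinner_scaleC_left complex_cnj_mult)
  also have "\<dots> = cnj a * cinner x y" by (simp only: cinner_commute[symmetric])
  finally show ?thesis .
qed
lemma scaleC_minus1: "scaleC (-1) (x::'a::complex_inner) = - x"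
  using scaleR_scaleC[of "-1" x] by simp
lemma cinner_minus_left: "cinner (- (x::'a::complex_inner)) y = - cinner x y"
proof -
  have "cinner (- x) y = cinner (scaleC (-1) x) y" by (simp only: scaleC_minus1)
  also have "\<dots> = (-1) * cinner x y" by (rule cinner_scaleC_left)
  finally show ?thesis by (simp only: mult_minus1)
qed
lemma cinner_diff_left: "cinner ((x::'a::complex_inner) - y) z = cinner x z - cinner y z"
  by (simp only: diff_conv_add_uminus cinner_add_left cinner_minus_left)
lemma cinner_diff_right: "cinner (x::'a::complex_inner) (y - z) = cinner x y - cinner x z"
proof -
  have "cinner x (y - z) = cnj (cinner (y - z) x)" by (rule cinner_commute)
  also have "\<dots> = cnj (cinner y x) - cnj (cinner z x)" by (simp only: cinner_diff_left complex_cnj_diff)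
  also have "\<dots> = cinner x y - cinner x z" by (simp only: cinner_commute[symmetric])
  finally show ?thesis .
qed
lemma cinner_self_real: "cinner (x::'a::complex_inner) x = of_real (Re (cinner x x))"
proof -
  have "cinner x x = cnj (cinner x x)" by (rule cinner_commute)
  from arg_cong[OF this, of Im] have "Im (cinner x x) = 0" by simp
  then show ?thesis by (simp add: complex_eq_iff)
qed
lemma norm_sq_cinner: "(norm (x::'a::complex_inner))^2 = Re (cinner x x)"
proof -
  have "Re (cinner x x) \<ge> 0"
  proof (rule ccontr)
    assume "\<not> ?thesis"
    then have "sqrt (Re (cinner x x)) < 0" by simp
    then show False using norm_eq_sqrt_cinner[of x] by (metis norm_ge_zero not_le)
  qed
  then show ?thesis using norm_eq_sqrt_cinner[of x] by simp
qed
lemma cinner_self_norm: "cinner (x::'a::complex_inner) x = of_real ((norm x)^2)"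
  unfolding norm_sq_cinner by (rule cinner_self_real)

lemma expand_norm:
  fixes w v :: "'a::complex_inner"
  shows "(norm (w - scaleC t v))^2 = (norm w)^2 - 2 * Re (cnj t * cinner w v) + (cmod t)^2 * (norm v)^2"
proof -
  have h1: "cinner (w - scaleC t v) (w - scaleC t v) = cinner w w - cnj t * cinner w v - t * cinner v w + (t * cnj t) * cinner v v"
    by (simp add: cinner_diff_left cinner_diff_right cinner_scaleC_left cinner_scaleC_right algebra_simps)
  have h2: "cinner v w = cnj (cinner w v)" by (rule cinner_commute)
  have h3: "t * cnj t = of_real ((cmod t)^2)" using complex_norm_square[of t] by simp
  have h4: "Re (t * cnj (cinner w v)) = Re (cnj t * cinner w v)"
    by (simp add: algebra_simps)
  have "Re (cinner (w - scaleC t v) (w - scaleC t v)) = Re (cinner w w) - Re (cnj t * cinner w v) - Re (t * cnj (cinner w v)) + (cmod t)^2 * Re (cinner v v)"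
    unfolding h1 h2 h3 by simp
  then show ?thesis unfolding norm_sq_cinner h4 by simp
qed

lemma parallelogram:
  fixes a b :: "'a::complex_inner"
  shows "(norm (a + b))^2 + (norm (a - b))^2 = 2 * (norm a)^2 + 2 * (norm b)^2"
proof -
  have "cinner (a + b) (a + b) + cinner (a - b) (a - b) = 2 * cinner a a + 2 * cinner b b"
    by (simp add: cinner_add_left cinner_add_right cinner_diff_left cinner_diff_right algebra_simps)
  from arg_cong[OF this, of Re] have "Re (cinner (a + b) (a + b)) + Re (cinner (a - b) (a - b)) = 2 * Re (cinner a a) + 2 * Re (cinner b b)"
    by simp
  then show ?thesis by (simp add: norm_sq_cinner)
qed


lemma scaleC_zero_right[simp]: "scaleC a (0::'a::complex_inner) = 0"
proof -
  have h: "scaleC a (0::'a) = scaleC a 0 + scaleC a 0" using scaleC_add_right[of a "0::'a" 0] by (simp only: add_0_right)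
  show ?thesis using add_cancel_right_right[of "scaleC a (0::'a)" "scaleC a 0"] h by blast
qed
lemma scaleC_zero_left[simp]: "scaleC 0 (x::'a::complex_inner) = 0"
proof -
  have h: "scaleC 0 x = scaleC 0 x + scaleC 0 x" using scaleC_add_left[of 0 0 x] by (simp only: add_0_right)
  show ?thesis using add_cancel_right_right[of "scaleC 0 x" "scaleC 0 x"] h by blast
qed

lemma scaleC_sum: "scaleC a (\<Sum>v\<in>F. f v) = (\<Sum>v\<in>F. scaleC a (f v :: 'a::complex_inner))"
  by (induction F rule: infinite_finite_induct) (simp_all add: scaleC_add_right)

lemma cinner_zero_right[simp]: "cinner (x::'a::complex_inner) 0 = 0"
proof -
  have "cinner x 0 = cnj (cinner 0 x)" by (rule cinner_commute)
  then show ?thesis by simp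
qed

lemma cspan_intro: "finite F \<Longrightarrow> F \<subseteq> S \<Longrightarrow> x = (\<Sum>v\<in>F. scaleC (c v) v) \<Longrightarrow> x \<in> cspan S"
  unfolding cspan_def by blast

lemma cinner_sum_right: "cinner (x::'a::complex_inner) (\<Sum>v\<in>F. f v) = (\<Sum>v\<in>F. cinner x (f v))"
  by (induction F rule: infinite_finite_induct) (simp_all add: cinner_add_right cinner_zero_right)

lemma cspan_add:
  assumes "x \<in> cspan S" "y \<in> cspan S" shows "x + y \<in> cspan S"
proof -
  from assms obtain F c G d where F: "finite F" "F \<subseteq> S" "x = (\<Sum>v\<in>F. scaleC (c v) v)"
    and G: "finite G" "G \<subseteq> S" "y = (\<Sum>v\<in>G. scaleC (d v) v)"
    unfolding cspan_def by blast
  define e where "e v = (if v \<in> F then c v else 0) + (if v \<in> G then d v else 0)" for v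
  have x: "x = (\<Sum>v\<in>F \<union> G. scaleC (if v \<in> F then c v else 0) v)"
    unfolding F(3) by (rule sum.mono_neutral_cong_left) (use F G in auto)
  have y: "y = (\<Sum>v\<in>F \<union> G. scaleC (if v \<in> G then d v else 0) v)"
    unfolding G(3) by (rule sum.mono_neutral_cong_left) (use F G in auto)
  have "x + y = (\<Sum>v\<in>F \<union> G. scaleC (e v) v)"
    unfolding x y e_def by (simp add: sum.distrib[symmetric] scaleC_add_left)
  then show ?thesis using F G by (intro cspan_intro[of "F \<union> G" S _ e]) auto
qed

lemma cspan_scaleC:
  assumes "x \<in> cspan S" shows "scaleC a x \<in> cspan S"
proof -
  from assms obtain F c where F: "finite F" "F \<subseteq> S" "x = (\<Sum>v\<in>F. scaleC (c v) v)"
    unfolding cspan_def by blast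
  have "scaleC a x = (\<Sum>v\<in>F. scaleC (a * c v) v)"
    unfolding F(3) by (simp add: scaleC_sum scaleC_scaleC)
  then show ?thesis using F by (intro cspan_intro[of F S _ "\<lambda>v. a * c v"]) auto
qed

lemma cspan_base: "v \<in> S \<Longrightarrow> v \<in> cspan S"
  by (rule cspan_intro[of "{v}" S v "\<lambda>_. 1"]) (simp_all add: scaleC_one)

lemma cspan_zero: "0 \<in> cspan S"
  by (rule cspan_intro[of "{}" S 0 "\<lambda>_. 1"]) simp_all

lemma orth_of_min:
  fixes w v :: "'a::complex_inner"
  assumes "\<And>t. (norm w)^2 \<le> (norm (w - scaleC t v))^2"
  shows "cinner w v = 0"
proof (rule ccontr)
  define a where "a = cinner w v"
  define N where "N = (norm v)^2"
  define A where "A = (cmod a)^2"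
  assume "cinner w v \<noteq> 0"
  then have ap: "A > 0" unfolding a_def A_def by simp
  have N0: "N \<ge> 0" unfolding N_def by simp
  define s where "s = 1 / (N + 1)"
  have N1: "N + 1 > 0" using N0 by linarith
  have sp: "s > 0" unfolding s_def using N1 by simp
  have sv: "s * N < 1" unfolding s_def using N1 by (simp add: divide_less_eq)
  have ca: "cnj a * a = of_real A"
    unfolding A_def using complex_norm_square[of a] by (simp only: mult.commute)
  have "cnj (of_real s * a) * a = of_real s * (cnj a * a)" by (simp add: mult.assoc)
  also have "\<dots> = of_real (s * A)" unfolding ca by simp
  finally have "cnj (of_real s * a) * a = of_real (s * A)" .
  then have e1: "Re (cnj (of_real s * a) * a) = s * A" by (simp only: Re_complex_of_real)
  have e2: "(cmod (of_real s * a))^2 = s^2 * A"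
    unfolding A_def using sp by (simp add: norm_mult power_mult_distrib)
  have "(norm (w - scaleC (of_real s * a) v))^2 = (norm w)^2 - 2 * (s * A) + (s^2 * A) * N"
    using expand_norm[of w "of_real s * a" v] unfolding a_def[symmetric] N_def[symmetric] e1 e2 .
  with assms[of "of_real s * a"] have "0 \<le> (s^2 * A) * N - 2 * (s * A)"
    by linarith
  also have "\<dots> = (s * A) * (s * N - 2)" by (simp add: algebra_simps power2_eq_square)
  finally have h: "0 \<le> (s * A) * (s * N - 2)" .
  have "s * A > 0" using sp ap by simp
  with h have "s * N - 2 \<ge> 0" by (simp add: zero_le_mult_iff)
  with sv show False by simp
qed


lemma dense_span:
  fixes \<phi> :: "nat \<Rightarrow> 'a::chilbert"
  assumes orth: "\<And>w. (\<And>k. cinner w (\<phi> k) = 0) \<Longrightarrow> w = 0"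
  shows "closure (cspan (range \<phi>)) = UNIV"
proof -
  let ?M = "cspan (range \<phi>)"
  have "z \<in> closure ?M" for z
  proof -
    define f where "f m = (norm (z - m))^2" for m
    define d where "d = Inf (f ` ?M)"
    have bdd: "bdd_below (f ` ?M)" unfolding f_def by (intro bdd_belowI[of _ 0]) auto
    have ne: "f ` ?M \<noteq> {}" using cspan_zero by blast
    have dle: "d \<le> f m" if "m \<in> ?M" for m unfolding d_def using bdd that by (intro cInf_lower) auto
    have "\<exists>m\<in>?M. f m < d + inverse (real (Suc n))" for n
    proof -
      have "Inf (f ` ?M) < d + inverse (real (Suc n))" unfolding d_def by simp
      then show ?thesis using cInf_less_iff[OF ne bdd] by auto
    qed
    then obtain mm where mmM: "\<And>n. mm n \<in> ?M" and mmb: "\<And>n. f (mm n) < d + inverse (real (Suc n))"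
      by metis
    have mid: "(norm (mm k - mm n))^2 \<le> 2 * inverse (real (Suc n)) + 2 * inverse (real (Suc k))" for n k
    proof -
      define c where "c = scaleR (1/2) (mm n + mm k)"
      have cM: "c \<in> ?M" unfolding c_def scaleR_scaleC
        by (intro cspan_scaleC cspan_add mmM)
      have e1: "(z - mm n) + (z - mm k) = scaleR 2 (z - c)"
        unfolding c_def by (simp add: algebra_simps scaleR_2)
      have e2: "(z - mm n) - (z - mm k) = mm k - mm n" by simp
      have "(norm (scaleR 2 (z - c)))^2 = 4 * f c" unfolding f_def by (simp add: power2_eq_square)
      with parallelogram[of "z - mm n" "z - mm k", unfolded e1 e2]
      have "(norm (mm k - mm n))^2 = 2 * f (mm n) + 2 * f (mm k) - 4 * f c"
        unfolding f_def by linarith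
      with dle[OF cM] mmb[of n] mmb[of k] show ?thesis by linarith
    qed
    have "Cauchy mm"
    proof (rule metric_CauchyI)
      fix e :: real assume e: "e > 0"
      obtain N :: nat where N: "4 / e^2 < real N" using reals_Archimedean2 by blast
      have "\<forall>m\<ge>N. \<forall>n\<ge>N. dist (mm m) (mm n) < e"
      proof (intro allI impI)
        fix m n assume mN: "m \<ge> N" and nN: "n \<ge> N"
        have i1: "inverse (real (Suc m)) \<le> inverse (real (Suc N))" using mN by (simp add: field_simps)
        have i2: "inverse (real (Suc n)) \<le> inverse (real (Suc N))" using nN by (simp add: field_simps)
        have "4 / e^2 < real (Suc N)" using N by simp
        then have "4 < e^2 * real (Suc N)" using e by (simp add: field_simps)
        then have i3: "4 * inverse (real (Suc N)) < e^2" by (simp add: field_simps)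
        have "(dist (mm m) (mm n))^2 = (norm (mm n - mm m))^2" by (simp add: dist_norm norm_minus_commute)
        also have "\<dots> \<le> 2 * inverse (real (Suc m)) + 2 * inverse (real (Suc n))" by (rule mid)
        also have "\<dots> < e^2" using i1 i2 i3 by linarith
        finally have "(dist (mm m) (mm n))^2 < e^2" .
        then show "dist (mm m) (mm n) < e" using e by (smt (verit) power_mono zero_le_dist)
      qed
      then show "\<exists>M. \<forall>m\<ge>M. \<forall>n\<ge>M. dist (mm m) (mm n) < e" by blast
    qed
    then obtain p where p: "mm \<longlonglongrightarrow> p" using Cauchy_convergent convergent_def by blast
    have pM: "p \<in> closure ?M" unfolding closure_sequential using mmM p by blast
    have fconv: "(\<lambda>n. f (mm n)) \<longlonglongrightarrow> f p" unfolding f_def by (intro tendsto_intros p)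
    have fp: "f p \<le> d"
      by (rule LIMSEQ_le[OF fconv LIMSEQ_inverse_real_of_nat_add[of d]]) (use mmb less_imp_le in blast)
    define w where "w = z - p"
    have "cinner w (\<phi> k) = 0" for k
    proof (rule orth_of_min)
      fix t
      have conv: "(\<lambda>n. f (mm n + scaleC t (\<phi> k))) \<longlonglongrightarrow> f (p + scaleC t (\<phi> k))"
        unfolding f_def by (intro tendsto_intros p)
      have "d \<le> f (p + scaleC t (\<phi> k))"
      proof (rule LIMSEQ_le_const[OF conv], intro exI allI impI)
        fix n
        have "mm n + scaleC t (\<phi> k) \<in> ?M" by (intro cspan_add cspan_scaleC mmM cspan_base) simp
        then show "d \<le> f (mm n + scaleC t (\<phi> k))" by (rule dle)
      qed
      moreover have "f (p + scaleC t (\<phi> k)) = (norm (w - scaleC t (\<phi> k)))^2"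
        unfolding f_def w_def by (simp add: algebra_simps)
      moreover have "f p = (norm w)^2" unfolding f_def w_def by simp
      ultimately show "(norm w)^2 \<le> (norm (w - scaleC t (\<phi> k)))^2"
        using fp by linarith
    qed
    then have "w = 0" by (rule orth)
    then show ?thesis using pM unfolding w_def by simp
  qed
  then show ?thesis by blast
qed


theorem proposition4p3:
  fixes \<phi> \<psi> :: "nat \<Rightarrow> 'a::chilbert"
    and D E :: "'a set"
    and r :: "nat \<Rightarrow> real"
  assumes biorth: "biorthogonal \<phi> \<psi>"
    and D_sub: "csubspace D" and E_sub: "csubspace E"
    and D_dense: "dense_in_H D" and E_dense: "dense_in_H E"
    and qb: "quasi_basis \<phi> \<psi> D E"
    and D1: "cspan (range \<psi>) \<subseteq> D" and D2: "D \<subseteq> Dom \<phi>"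
    and E1: "cspan (range \<phi>) \<subseteq> E" and E2: "E \<subseteq> Dom \<psi>"
    and r_ge: "\<And>n. r n \<ge> 1"
    and r_D: "Dom_weighted r \<phi> \<subseteq> D"
    and r_dense: "dense_in_H (Dom_weighted r \<phi>)"
  shows "dense_in_H (cspan (range \<phi>)) \<and> quasi_basis \<phi> \<psi> (Dom \<phi>) (cspan (range \<phi>))"
proof
  have orth: "w = 0" if w: "\<And>k. cinner w (\<phi> k) = 0" for w
  proof (rule ccontr)
    assume wn: "w \<noteq> 0"
    have "w \<in> Dom_weighted r \<phi>" unfolding Dom_weighted_def using w by simp
    then have wD: "w \<in> D" using r_D by blast
    have wy: "cinner w y = 0" if y: "y \<in> E" for y
    proof -
      have "(\<lambda>k. cinner w (\<phi> k) * cinner (\<psi> k) y) sums cinner w y"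
        using qb wD y unfolding quasi_basis_def by blast
      then have "(\<lambda>k. 0) sums cinner w y" using w by simp
      then show ?thesis using sums_zero sums_unique2 by metis
    qed
    have "w \<in> closure E" using E_dense unfolding dense_in_H_def by simp
    moreover have "norm w > 0" using wn by simp
    ultimately obtain y where yE: "y \<in> E" and yd: "dist y w < norm w"
      unfolding closure_approachable by blast
    have "(norm (w - scaleC 1 y))^2 = (norm w)^2 - 2 * Re (cnj 1 * cinner w y) + (cmod 1)^2 * (norm y)^2"
      by (rule expand_norm)
    then have "(norm (w - y))^2 = (norm w)^2 + (norm y)^2" using wy[OF yE] by (simp add: scaleC_one)
    then have "(norm w)^2 \<le> (norm (w - y))^2" by simp
    then have "norm w \<le> norm (w - y)" by (simp add: power_mono_iff)
    moreover have "norm (w - y) = dist y w" by (simp add: dist_norm norm_minus_commute)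
    ultimately show False using yd by linarith
  qed
  show "dense_in_H (cspan (range \<phi>))" unfolding dense_in_H_def by (rule dense_span[OF orth]) blast
next
  have bo: "cinner (\<phi> n) (\<psi> m) = (if n = m then 1 else 0)" for n m
    using biorth unfolding biorthogonal_def by blast
  have inj: "inj \<phi>"
  proof (rule injI)
    fix a b assume "\<phi> a = \<phi> b"
    then have "cinner (\<phi> a) (\<psi> b) = cinner (\<phi> b) (\<psi> b)" by simp
    then show "a = b" using bo[of a b] bo[of b b] by (auto split: if_splits)
  qed
  have pe: "cinner (\<psi> k) v = (if v = \<phi> k then 1 else 0)" if "v \<in> range \<phi>" for k v
  proof -
    from that obtain j where j: "v = \<phi> j" by blast
    have "cinner (\<psi> k) (\<phi> j) = cnj (cinner (\<phi> j) (\<psi> k))" by (rule cinner_commute)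
    also have "\<dots> = (if j = k then 1 else 0)" using bo[of j k] by simp
    also have "\<dots> = (if \<phi> j = \<phi> k then 1 else 0)" using inj by (simp add: inj_eq)
    finally show ?thesis using j by simp
  qed
  show "quasi_basis \<phi> \<psi> (Dom \<phi>) (cspan (range \<phi>))"
    unfolding quasi_basis_def
  proof (intro ballI)
    fix x y assume "x \<in> Dom \<phi>" "y \<in> cspan (range \<phi>)"
    then obtain F c where F: "finite F" "F \<subseteq> range \<phi>" and y: "y = (\<Sum>v\<in>F. scaleC (c v) v)"
      unfolding cspan_def by blast
    have py: "cinner (\<psi> k) y = (if \<phi> k \<in> F then cnj (c (\<phi> k)) else 0)" for k
    proof -
      have "cinner (\<psi> k) y = (\<Sum>v\<in>F. cnj (c v) * cinner (\<psi> k) v)"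
        unfolding y by (simp add: cinner_sum_right cinner_scaleC_right)
      also have "\<dots> = (\<Sum>v\<in>F. if \<phi> k = v then cnj (c v) else 0)"
        by (rule sum.cong) (use F pe in auto)
      also have "\<dots> = (if \<phi> k \<in> F then cnj (c (\<phi> k)) else 0)" using F(1) by simp
      finally show ?thesis .
    qed
    define K where "K = \<phi> -` F"
    have K: "finite K" unfolding K_def using F(1) inj by (rule finite_vimageI)
    have ij: "inj_on \<phi> K" by (rule inj_on_subset[OF inj subset_UNIV])
    have eqf: "(\<lambda>k. cinner x (\<phi> k) * cinner (\<psi> k) y) = (\<lambda>k. if k \<in> K then cinner x (\<phi> k) * cnj (c (\<phi> k)) else 0)"
      unfolding py K_def by (rule ext) simp
    have s1: "(\<lambda>k. if k \<in> K then cinner x (\<phi> k) * cnj (c (\<phi> k)) else 0) sums (\<Sum>k\<in>K. cinner x (\<phi> k) * cnj (c (\<phi> k)))"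
      by (rule sums_If_finite_set[OF K])
    have s2: "(\<Sum>v\<in>\<phi> ` K. cinner x v * cnj (c v)) = (\<Sum>k\<in>K. cinner x (\<phi> k) * cnj (c (\<phi> k)))"
      using sum.reindex[OF ij, of "\<lambda>v. cinner x v * cnj (c v)"] by (simp only: comp_def)
    have s3: "\<phi> ` K = F" unfolding K_def using F(2) by auto
    have s4: "cinner x y = (\<Sum>v\<in>F. cinner x v * cnj (c v))"
      unfolding y by (simp add: cinner_sum_right cinner_scaleC_right mult.commute)
    have "cinner x y = (\<Sum>k\<in>K. cinner x (\<phi> k) * cnj (c (\<phi> k)))"
      unfolding s4 s2[unfolded s3] ..
    then show "(\<lambda>k. cinner x (\<phi> k) * cinner (\<psi> k) y) sums cinner x y"
      unfolding eqf using s1 by simp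
  qed
qed

end
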